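(* Let $(X,d,\mu)$ be as in the context (no doubling assumed) and $x\in X$. Then $\underline{Q}_0(x)\subset\underline{S}_0(x)$ and $\overline{Q}_0(x)\subset\overline{S}_0(x)$. Moreover, $\underline{S}_0(x)\cap\overline{S}_0(x)$ contains at most one point, and when it is nonempty, $\underline{Q}_0(x)=\underline{S}_0(x)$ and $\overline{Q}_0(x)=\overline{S}_0(x)$.
   Context: $(X,d,\mu)$ is a metric space with a positive complete Borel measure $\mu$ such that $0<\mu(B)<\infty$ for every ball $B$; $B_r=B(x,r)$. $\underline{Q}_0(x)=\{q>0:\exists C_q,\ \mu(B_r)/\mu(B_R)\le C_q(r/R)^q\text{ for }0<r<R\le1\}$; $\underline{S}_0(x)=\{q>0:\exists C_q,\ \mu(B_r)\le C_qr^q\text{ for }0<r\le1\}$; $\overline{S}_0(x)=\{q>0:\exists C_q,\ \mu(B_r)\ge C_qr^q\text{ for }0<r\le1\}$; $\overline{Q}_0(x)=\{q>0:\exists C_q,\ \mu(B_r)/\mu(B_R)\ge C_q(r/R)^q\text{ for }0<r<R\le1\}$. *)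

theory Defs
  imports "HOL-Analysis.Analysis"
begin

text \<open>X is the (metric space) type 'a, mu is a measure M on it. B(x,r) is the open ball.
  Ball measures are used as reals (they are finite by hypothesis).\<close>

definition lowerQ0 :: "'a::metric_space measure \<Rightarrow> 'a \<Rightarrow> real set" where
  "lowerQ0 M x = {q. q > 0 \<and> (\<exists>C>0. \<forall>r R. 0 < r \<and> r < R \<and> R \<le> 1 \<longrightarrow>
      measure M (ball x r) / measure M (ball x R) \<le> C * (r / R) powr q)}"

definition lowerS0 :: "'a::metric_space measure \<Rightarrow> 'a \<Rightarrow> real set" where
  "lowerS0 M x = {q. q > 0 \<and> (\<exists>C>0. \<forall>r. 0 < r \<and> r \<le> 1 \<longrightarrow>
      measure M (ball x r) \<le> C * r powr q)}"

definition upperS0 :: "'a::metric_space measure \<Rightarrow> 'a \<Rightarrow> real set" where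
  "upperS0 M x = {q. q > 0 \<and> (\<exists>C>0. \<forall>r. 0 < r \<and> r \<le> 1 \<longrightarrow>
      measure M (ball x r) \<ge> C * r powr q)}"

definition upperQ0 :: "'a::metric_space measure \<Rightarrow> 'a \<Rightarrow> real set" where
  "upperQ0 M x = {q. q > 0 \<and> (\<exists>C>0. \<forall>r R. 0 < r \<and> r < R \<and> R \<le> 1 \<longrightarrow>
      measure M (ball x r) / measure M (ball x R) \<ge> C * (r / R) powr q)}"

end

theory Submission
  imports Defs
begin

lemma small_powr:
  fixes a D :: real assumes "a > 0" "D > 0"
  shows "\<exists>r. 0 < r \<and> r \<le> 1 \<and> r powr a < D"
proof -
  define r where "r = min 1 ((D/2) powr (1/a))"
  have r0: "r > 0" using assms by (simp add: r_def)
  have "r powr a \<le> ((D/2) powr (1/a)) powr a"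
    using assms r0 by (intro powr_mono2) (auto simp: r_def)
  also have "\<dots> = D/2" using assms by (simp add: powr_powr)
  finally show ?thesis using r0 assms by (intro exI[of _ r]) (auto simp: r_def)
qed

context
  fixes M :: "'a::metric_space measure" and x :: 'a
  assumes pos: "\<And>r. 0 < r \<Longrightarrow> 0 < measure M (ball x r)"
begin

lemma QS_lower: "lowerQ0 M x \<subseteq> lowerS0 M x"
proof
  fix q assume "q \<in> lowerQ0 M x"
  then obtain C where q: "q > 0" "C > 0" and C: "\<And>r R. 0 < r \<Longrightarrow> r < R \<Longrightarrow> R \<le> 1 \<Longrightarrow>
      measure M (ball x r) / measure M (ball x R) \<le> C * (r / R) powr q"
    unfolding lowerQ0_def by blast
  define m1 where "m1 = measure M (ball x 1)"
  have m1: "m1 > 0" using pos[of 1] by (simp add: m1_def)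
  have "\<forall>r. 0 < r \<and> r \<le> 1 \<longrightarrow> measure M (ball x r) \<le> ((C+1)*m1) * r powr q"
  proof (intro allI impI)
    fix r :: real assume r: "0 < r \<and> r \<le> 1"
    show "measure M (ball x r) \<le> ((C+1)*m1) * r powr q"
    proof (cases "r = 1")
      case True thus ?thesis using m1 q by (simp add: m1_def algebra_simps)
    next
      case False
      hence "measure M (ball x r) / m1 \<le> C * r powr q" using C[of r 1] r by (simp add: m1_def)
      hence "measure M (ball x r) \<le> C * r powr q * m1" using m1 by (simp add: field_simps)
      also have "\<dots> \<le> ((C+1)*m1) * r powr q" using m1 by (simp add: algebra_simps)
      finally show ?thesis .
    qed
  qed
  thus "q \<in> lowerS0 M x" unfolding lowerS0_def using q m1
    by (intro CollectI conjI exI[of _ "(C+1)*m1"]) auto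
qed

lemma QS_upper: "upperQ0 M x \<subseteq> upperS0 M x"
proof
  fix q assume "q \<in> upperQ0 M x"
  then obtain C where q: "q > 0" "C > 0" and C: "\<And>r R. 0 < r \<Longrightarrow> r < R \<Longrightarrow> R \<le> 1 \<Longrightarrow>
      measure M (ball x r) / measure M (ball x R) \<ge> C * (r / R) powr q"
    unfolding upperQ0_def by blast
  define m1 where "m1 = measure M (ball x 1)"
  have m1: "m1 > 0" using pos[of 1] by (simp add: m1_def)
  have "\<forall>r. 0 < r \<and> r \<le> 1 \<longrightarrow> measure M (ball x r) \<ge> ((min C 1)*m1) * r powr q"
  proof (intro allI impI)
    fix r :: real assume r: "0 < r \<and> r \<le> 1"
    show "measure M (ball x r) \<ge> ((min C 1)*m1) * r powr q"
    proof (cases "r = 1")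
      case True thus ?thesis using m1 q by (simp add: m1_def algebra_simps)
    next
      case False
      hence "measure M (ball x r) / m1 \<ge> C * r powr q" using C[of r 1] r by (simp add: m1_def)
      hence "measure M (ball x r) \<ge> C * r powr q * m1" using m1 by (simp add: field_simps)
      moreover have "C * r powr q * m1 \<ge> ((min C 1)*m1) * r powr q"
        using m1 by (simp add: algebra_simps mult_right_mono)
      ultimately show ?thesis by linarith
    qed
  qed
  thus "q \<in> upperS0 M x" unfolding upperS0_def using q m1
    by (intro CollectI conjI exI[of _ "(min C 1)*m1"]) auto
qed

lemma lowerS_down: "q \<in> lowerS0 M x \<Longrightarrow> 0 < p \<Longrightarrow> p \<le> q \<Longrightarrow> p \<in> lowerS0 M x"
  unfolding lowerS0_def
proof (clarsimp)
  fix C assume C: "C > 0" "\<forall>r. 0 < r \<and> r \<le> 1 \<longrightarrow> measure M (ball x r) \<le> C * r powr q"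
    and p: "0 < p" "p \<le> q"
  have "\<forall>r. 0 < r \<and> r \<le> 1 \<longrightarrow> measure M (ball x r) \<le> C * r powr p"
  proof (intro allI impI)
    fix r :: real assume r: "0 < r \<and> r \<le> 1"
    have "r powr q \<le> r powr p" using r p by (intro powr_mono') auto
    thus "measure M (ball x r) \<le> C * r powr p" using C r
      by (meson mult_left_mono less_imp_le order_trans)
  qed
  thus "\<exists>C>0. \<forall>r. 0 < r \<and> r \<le> 1 \<longrightarrow> measure M (ball x r) \<le> C * r powr p" using C by blast
qed

lemma upperS_up:
  assumes q: "q \<in> upperS0 M x" and p: "q \<le> p" shows "p \<in> upperS0 M x"
proof -
  have q0: "0 < q" using q by (simp add: upperS0_def)
  obtain C where C: "C > 0" "\<forall>r. 0 < r \<and> r \<le> 1 \<longrightarrow> measure M (ball x r) \<ge> C * r powr q"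
    using q unfolding upperS0_def mem_Collect_eq by blast
  have "\<forall>r. 0 < r \<and> r \<le> 1 \<longrightarrow> measure M (ball x r) \<ge> C * r powr p"
  proof (intro allI impI)
    fix r :: real assume r: "0 < r \<and> r \<le> 1"
    have "r powr p \<le> r powr q" using r p by (intro powr_mono') auto
    thus "measure M (ball x r) \<ge> C * r powr p" using C r
      by (meson mult_left_mono less_imp_le order_trans)
  qed
  thus ?thesis unfolding upperS0_def mem_Collect_eq using C p q0 by auto
qed

lemma lowerQ_down: "q \<in> lowerQ0 M x \<Longrightarrow> 0 < p \<Longrightarrow> p \<le> q \<Longrightarrow> p \<in> lowerQ0 M x"
  unfolding lowerQ0_def
proof (clarsimp)
  fix C assume C: "C > 0" "\<forall>r R. 0 < r \<and> r < R \<and> R \<le> 1 \<longrightarrow>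
      measure M (ball x r) / measure M (ball x R) \<le> C * (r / R) powr q"
    and p: "0 < p" "p \<le> q"
  have "\<forall>r R. 0 < r \<and> r < R \<and> R \<le> 1 \<longrightarrow>
      measure M (ball x r) / measure M (ball x R) \<le> C * (r / R) powr p"
  proof (intro allI impI)
    fix r R :: real assume r: "0 < r \<and> r < R \<and> R \<le> 1"
    have "(r/R) powr q \<le> (r/R) powr p" using r p by (intro powr_mono') auto
    thus "measure M (ball x r) / measure M (ball x R) \<le> C * (r / R) powr p" using C r
      by (meson mult_left_mono less_imp_le order_trans)
  qed
  thus "\<exists>C>0. \<forall>r R. 0 < r \<and> r < R \<and> R \<le> 1 \<longrightarrow>
      measure M (ball x r) / measure M (ball x R) \<le> C * (r / R) powr p" using C by blast
qed

lemma upperQ_up: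
  assumes q: "q \<in> upperQ0 M x" and p: "q \<le> p" shows "p \<in> upperQ0 M x"
proof -
  have q0: "0 < q" using q by (simp add: upperQ0_def)
  obtain C where C: "C > 0" "\<forall>r R. 0 < r \<and> r < R \<and> R \<le> 1 \<longrightarrow>
      measure M (ball x r) / measure M (ball x R) \<ge> C * (r / R) powr q"
    using q unfolding upperQ0_def mem_Collect_eq by blast
  have "\<forall>r R. 0 < r \<and> r < R \<and> R \<le> 1 \<longrightarrow>
      measure M (ball x r) / measure M (ball x R) \<ge> C * (r / R) powr p"
  proof (intro allI impI)
    fix r R :: real assume r: "0 < r \<and> r < R \<and> R \<le> 1"
    have "(r/R) powr p \<le> (r/R) powr q" using r p by (intro powr_mono') auto
    thus "measure M (ball x r) / measure M (ball x R) \<ge> C * (r / R) powr p" using C r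
      by (meson mult_left_mono less_imp_le order_trans)
  qed
  thus ?thesis unfolding upperQ0_def mem_Collect_eq using C p q0 by auto
qed

lemma both_Q:
  assumes "s \<in> lowerS0 M x" "s \<in> upperS0 M x"
  shows "s \<in> lowerQ0 M x \<and> s \<in> upperQ0 M x"
proof -
  obtain C1 where s: "s > 0" and C1: "C1 > 0" "\<And>r. 0 < r \<Longrightarrow> r \<le> 1 \<Longrightarrow> measure M (ball x r) \<le> C1 * r powr s"
    using assms(1) unfolding lowerS0_def by blast
  obtain C2 where C2: "C2 > 0" "\<And>r. 0 < r \<Longrightarrow> r \<le> 1 \<Longrightarrow> measure M (ball x r) \<ge> C2 * r powr s"
    using assms(2) unfolding upperS0_def by blast
  have L: "measure M (ball x r) / measure M (ball x R) \<le> (C1/C2) * (r / R) powr s"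
   and U: "measure M (ball x r) / measure M (ball x R) \<ge> (C2/C1) * (r / R) powr s"
    if r: "0 < r" "r < R" "R \<le> 1" for r R
  proof -
    have mr: "measure M (ball x r) \<le> C1 * r powr s" "measure M (ball x r) \<ge> C2 * r powr s"
      using C1 C2 r by auto
    have mR: "measure M (ball x R) \<le> C1 * R powr s" "measure M (ball x R) \<ge> C2 * R powr s"
      using C1 C2 r by auto
    have pr: "r powr s > 0" "R powr s > 0" using r by auto
    have eq: "(r / R) powr s = r powr s / R powr s" using r by (simp add: powr_divide)
    have mRp: "measure M (ball x R) > 0" using pos r by auto
    have "measure M (ball x r) / measure M (ball x R) \<le> C1 * r powr s / (C2 * R powr s)"
      using mr mR mRp C1 C2 pr
      by (intro frac_le) (auto intro: order_trans[OF _ mr(1)])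
    also have "\<dots> = (C1/C2) * (r / R) powr s" using eq by simp
    finally show "measure M (ball x r) / measure M (ball x R) \<le> (C1/C2) * (r / R) powr s" .
    have "C2 * r powr s / (C1 * R powr s) \<le> measure M (ball x r) / measure M (ball x R)"
      using mr mR mRp C1 C2 pr by (intro frac_le) auto
    moreover have "C2 * r powr s / (C1 * R powr s) = (C2/C1) * (r / R) powr s" using eq by simp
    ultimately show "measure M (ball x r) / measure M (ball x R) \<ge> (C2/C1) * (r / R) powr s" by simp
  qed
  have "s \<in> lowerQ0 M x" unfolding lowerQ0_def mem_Collect_eq
    apply (rule conjI[OF s])
    apply (rule exI[of _ "C1/C2"])
    using C1 C2 L by auto
  moreover have "s \<in> upperQ0 M x" unfolding upperQ0_def mem_Collect_eq
    apply (rule conjI[OF s])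
    apply (rule exI[of _ "C2/C1"])
    using C1 C2 U by auto
  ultimately show ?thesis by blast
qed

lemma unique:
  assumes "p \<in> lowerS0 M x" "p \<in> upperS0 M x" "q \<in> lowerS0 M x" "q \<in> upperS0 M x"
  shows "p = q"
proof -
  have key: False if A: "a \<in> lowerS0 M x" and B: "b \<in> upperS0 M x" and ab: "b < a" for a b
  proof -
    obtain C1 where C1: "C1 > 0" "\<forall>r. 0 < r \<and> r \<le> 1 \<longrightarrow> measure M (ball x r) \<le> C1 * r powr a"
      using A unfolding lowerS0_def mem_Collect_eq by blast
    obtain C2 where C2: "C2 > 0" "\<forall>r. 0 < r \<and> r \<le> 1 \<longrightarrow> measure M (ball x r) \<ge> C2 * r powr b"
      using B unfolding upperS0_def mem_Collect_eq by blast
    obtain r where r: "0 < r" "r \<le> 1" "r powr (a - b) < C2 / C1"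
      using small_powr[of "a-b" "C2/C1"] ab C1 C2 by auto
    have "C2 * r powr b \<le> C1 * r powr a" using C1(2) C2(2) r(1,2) by (meson order_trans)
    moreover have "r powr a = r powr (a - b) * r powr b" using r by (simp add: powr_add[symmetric])
    ultimately have "C2 * r powr b \<le> (C1 * r powr (a-b)) * r powr b" by simp
    hence "C2 \<le> C1 * r powr (a-b)" using r by simp
    moreover have "C1 * r powr (a-b) < C2" using r C1 by (simp add: field_simps)
    ultimately show False by linarith
  qed
  show ?thesis using key[of p q] key[of q p] assms by fastforce
qed

end

theorem lemma2p3:
  fixes M :: "'a::metric_space measure" and x :: 'a
  assumes space: "space M = UNIV"
    and borel: "sets borel \<subseteq> sets M"
    and complete: "complete_measure M"
    and balls: "\<And>y r. 0 < r \<Longrightarrow> 0 < emeasure M (ball y r) \<and> emeasure M (ball y r) < \<infinity>"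
  shows "lowerQ0 M x \<subseteq> lowerS0 M x
    \<and> upperQ0 M x \<subseteq> upperS0 M x
    \<and> (\<forall>p q. p \<in> lowerS0 M x \<inter> upperS0 M x \<and> q \<in> lowerS0 M x \<inter> upperS0 M x \<longrightarrow> p = q)
    \<and> (lowerS0 M x \<inter> upperS0 M x \<noteq> {} \<longrightarrow>
           lowerQ0 M x = lowerS0 M x \<and> upperQ0 M x = upperS0 M x)"
proof -
  have pos: "\<And>r. 0 < r \<Longrightarrow> 0 < measure M (ball x r)"
    using balls by (simp add: measure_def enn2real_positive_iff)
  have part4: "lowerQ0 M x = lowerS0 M x \<and> upperQ0 M x = upperS0 M x"
    if s: "s \<in> lowerS0 M x" "s \<in> upperS0 M x" for s
  proof -
    have sQ: "s \<in> lowerQ0 M x" "s \<in> upperQ0 M x" using both_Q[OF pos s] by auto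
    have "lowerS0 M x \<subseteq> lowerQ0 M x"
    proof
      fix q assume q: "q \<in> lowerS0 M x"
      have "q \<le> s"
      proof (rule ccontr)
        assume "\<not> q \<le> s"
        hence "q \<in> upperS0 M x" using upperS_up[OF pos s(2)] by auto
        thus False using unique[OF pos q _ s] \<open>\<not> q \<le> s\<close> by auto
      qed
      moreover have "q > 0" using q by (simp add: lowerS0_def)
      ultimately show "q \<in> lowerQ0 M x" using lowerQ_down[OF pos sQ(1)] by auto
    qed
    moreover have "upperS0 M x \<subseteq> upperQ0 M x"
    proof
      fix q assume q: "q \<in> upperS0 M x"
      have "s \<le> q"
      proof (rule ccontr)
        assume "\<not> s \<le> q"
        moreover have "q > 0" using q by (simp add: upperS0_def)
        ultimately have "q \<in> lowerS0 M x" using lowerS_down[OF pos s(1)] by auto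
        thus False using unique[OF pos _ q s] \<open>\<not> s \<le> q\<close> by auto
      qed
      thus "q \<in> upperQ0 M x" using upperQ_up[OF pos sQ(2)] by auto
    qed
    ultimately show ?thesis using QS_lower[OF pos] QS_upper[OF pos] by blast
  qed
  show ?thesis using QS_lower[OF pos] QS_upper[OF pos] unique[OF pos] part4 by blast
qed

end
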